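(* Let $(\mathcal{C},\psi)$ be a limited t-pair with $\operatorname{typ}(\mathcal{U}^{ai}_{\mathcal{C}\psi})=\alpha$. Then $\operatorname{typ}(\mathcal{U}^{di}_{\mathcal{C}\psi})\in\{\alpha,\beta\}$.
   Context: Let $\mathbb{N}=\{0,1,2,\dots\}$; for an integer $k\ge 2$ let $E_k=\{0,1,\dots,k-1\}$; let $\mathcal{P}(\mathbb{N})$ be the set of nonempty finite subsets of $\mathbb{N}$. Let $F$ be a nonempty set (of attribute names). A decision table $T\in\mathcal{M}_k(F)$ is a rectangular table with $n\ge 1$ columns labeled with attributes $f_1,\dots,f_n\in F$ (any two columns labeled with the same attribute are equal), whose rows are pairwise different tuples from $E_k^n$ (the set of rows may be empty), each row being labeled with a set of decisions from $\mathcal{P}(\mathbb{N})$. Write $At(T)=\{f_1,\dots,f_n\}$ and $\Delta(T)$ for the set of rows. For a word $\alpha=(f_{i_1},\delta_1)\cdots(f_{i_m},\delta_m)$ with $f_{i_j}\in At(T)$, $\delta_j\in E_k$, the subtable $T\alpha$ consists of the rows of $T$ having value $\delta_j$ in column $f_{i_j}$ for all $j$ ($T\lambda=T$ for the empty word $\lambda$). Operations on tables: (1) removal of a column from a table with at least two columns (if groups of equal rows appear, only the first row of each group, with its decision set, is kept); (2) changing of decisions: the decision sets attached to rows are replaced arbitrarily by sets from $\mathcal{P}(\mathbb{N})$; (3) permutation of columns: swap two columns together with their attribute labels; (4) duplication of columns: add a copy of a column (with its label) next to it. A set $\mathcal{C}\subseteq\mathcal{M}_k(F)$ is a closed class if every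 table obtained from a table of $\mathcal{C}$ by finitely many such operations belongs to $\mathcal{C}$. A decision tree over $\mathcal{M}_k(F)$ is a finite directed tree with a root (unique node with no entering edge) and at least two nodes such that the root and the edges leaving the root are unlabeled, each worker node (neither root nor terminal) is labeled with an attribute from $F$, each edge leaving a worker node is labeled with a number from $E_k$, and each terminal node is labeled with a number from $\mathbb{N}$. For a complete path $\xi$ (root to terminal node) whose worker nodes are labeled $f_{j_1},\dots,f_{j_m}$ in order, with the edges leaving them labeled $\delta_1,\dots,\delta_m$, put $\pi(\xi)=(f_{j_1},\delta_1)\cdots(f_{j_m},\delta_m)$, $\varphi(\xi)=f_{j_1}\cdots f_{j_m}$ (both empty if $m=0$), and let $\tau(\xi)$ be the label of its terminal node. A nondeterministic decision tree for $T$ is a decision tree $\Gamma$ whose worker-node attributes lie in $At(T)$, such that $\bigcup_{\xi}\Delta(T\pi(\xi))=\Delta(T)$ (union over complete paths), and for every row $r\in\Delta(T)$ and every complete path $\xi$ with $r\in\Delta(T\pi(\xi))$, $\tau(\xi)$ belongs to the decision set of $r$. A decision tree is deterministic if exactly one edge leaves the root and the edges leaving each worker node have pairwise different labels; a deterministic decision tree for $T$ is a deterministic decision tree that is a nondeterministic decision tree for $T$. A complexity measure over $\mathcal{M}_k(F)$ is any map $\psi:F^*\to\mathbb{N}$, where $F^*$ is the set of finite words over $F$ including the empty word $\lambda$. It is limited if for all words (a) $\psi(\alpha_1\alpha_2)\le\psi(\alpha_1)+\psi(\alpha_2)$, (b) $\psi(\alpha_1\alpha_2\alpha_3)\ge\psi(\alpha_1\alpha_3)$,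 (c) $\psi(\alpha)\ge|\alpha|$. For a tree, $\psi(\Gamma)=\max_\xi\psi(\varphi(\xi))$ over complete paths. For $T$ with columns labeled $f_1,\dots,f_n$: $\psi^i(T)=\psi(f_1\cdots f_n)$, $\psi^d(T)$ is the minimum complexity of a deterministic decision tree for $T$, $\psi^a(T)$ the minimum complexity of a nondeterministic decision tree for $T$. A t-pair $(\mathcal{C},\psi)$ consists of a closed class $\mathcal{C}\subseteq\mathcal{M}_k(F)$ and a complexity measure $\psi$ over $\mathcal{M}_k(F)$; it is limited if $\psi$ is limited. For $b,c\in\{i,d,a\}$ define the partial function $\mathcal{U}^{bc}_{\mathcal{C}\psi}(n)=\max\{\psi^b(T):T\in\mathcal{C},\psi^c(T)\le n\}$ (defined iff this set is nonempty and finite). For a partial function $g:\mathbb{N}\to\mathbb{N}$ with domain $\mathrm{Dom}(g)$, let $\mathrm{Dom}^+(g)=\{n\in\mathrm{Dom}(g):g(n)\ge n\}$, $\mathrm{Dom}^-(g)=\{n\in\mathrm{Dom}(g):g(n)\le n\}$. Its type $\operatorname{typ}(g)$ is: $\alpha$ if $\mathrm{Dom}(g)$ is infinite and $g$ is bounded above; $\beta$ if $\mathrm{Dom}(g)$ is infinite, $\mathrm{Dom}^+(g)$ is finite and $g$ is unbounded above; $\gamma$ if $\mathrm{Dom}^+(g)$ and $\mathrm{Dom}^-(g)$ are both infinite; $\delta$ if $\mathrm{Dom}(g)$ is infinite and $\mathrm{Dom}^-(g)$ is finite; $\epsilon$ if $\mathrm{Dom}(g)$ is finite. *)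

theory Defs
  imports Main
begin

text \<open>A decision table: list of column attribute labels, and the list of rows (in order),
  each row being a tuple (list of values) together with its decision set.\<close>
type_synonym 'f table = "'f list \<times> (nat list \<times> nat set) list"

definition cols :: "'f table \<Rightarrow> 'f list" where "cols T = fst T"
definition rows :: "'f table \<Rightarrow> (nat list \<times> nat set) list" where "rows T = snd T"

definition At :: "'f table \<Rightarrow> 'f set" where "At T = set (cols T)"
definition Delta :: "'f table \<Rightarrow> nat list set" where "Delta T = set (map fst (rows T))"

text \<open>Membership in \<open>M_k(F)\<close> (F = UNIV of type 'f).\<close>
definition tbl :: "nat \<Rightarrow> 'f table \<Rightarrow> bool" where
  "tbl k T \<longleftrightarrow> cols T \<noteq> [] \<and>
     (\<forall>(r, D) \<in> set (rows T). length r = length (cols T) \<and> (\<forall>x \<in> set r. x < k)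
        \<and> D \<noteq> {} \<and> finite D) \<and>
     distinct (map fst (rows T)) \<and>
     (\<forall>i < length (cols T). \<forall>j < length (cols T). cols T ! i = cols T ! j \<longrightarrow>
        (\<forall>(r, D) \<in> set (rows T). r ! i = r ! j))"

definition sat :: "'f table \<Rightarrow> nat list \<Rightarrow> ('f \<times> nat) list \<Rightarrow> bool" where
  "sat T r \<alpha> \<longleftrightarrow> (\<forall>(f, \<delta>) \<in> set \<alpha>. \<forall>i < length (cols T). cols T ! i = f \<longrightarrow> r ! i = \<delta>)"

definition DeltaSub :: "'f table \<Rightarrow> ('f \<times> nat) list \<Rightarrow> nat list set" where
  "DeltaSub T \<alpha> = {r \<in> Delta T. sat T r \<alpha>}"

definition del_at :: "nat \<Rightarrow> 'a list \<Rightarrow> 'a list" where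
  "del_at i xs = take i xs @ drop (Suc i) xs"

definition dup_at :: "nat \<Rightarrow> 'a list \<Rightarrow> 'a list" where
  "dup_at i xs = take (Suc i) xs @ [xs ! i] @ drop (Suc i) xs"

definition swap_at :: "nat \<Rightarrow> nat \<Rightarrow> 'a list \<Rightarrow> 'a list" where
  "swap_at i j xs = xs[i := xs ! j, j := xs ! i]"

definition keep_first :: "(nat list \<times> nat set) list \<Rightarrow> (nat list \<times> nat set) list" where
  "keep_first xs = [xs ! i. i \<leftarrow> [0..<length xs], \<forall>j < i. fst (xs ! j) \<noteq> fst (xs ! i)]"

inductive op_step :: "'f table \<Rightarrow> 'f table \<Rightarrow> bool" where
  remove: "2 \<le> length (cols T) \<Longrightarrow> i < length (cols T) \<Longrightarrow>
     op_step T (del_at i (cols T), keep_first (map (\<lambda>(r, D). (del_at i r, D)) (rows T)))"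
| change: "map fst rs = map fst (rows T) \<Longrightarrow> (\<forall>(r, D) \<in> set rs. D \<noteq> {} \<and> finite D) \<Longrightarrow>
     op_step T (cols T, rs)"
| permute: "i < length (cols T) \<Longrightarrow> j < length (cols T) \<Longrightarrow>
     op_step T (swap_at i j (cols T), map (\<lambda>(r, D). (swap_at i j r, D)) (rows T))"
| duplicate: "i < length (cols T) \<Longrightarrow>
     op_step T (dup_at i (cols T), map (\<lambda>(r, D). (dup_at i r, D)) (rows T))"

definition closed_class :: "nat \<Rightarrow> 'f table set \<Rightarrow> bool" where
  "closed_class k C \<longleftrightarrow> C \<subseteq> {T. tbl k T} \<and>
     (\<forall>T \<in> C. \<forall>T'. op_step\<^sup>*\<^sup>* T T' \<longrightarrow> T' \<in> C)"

text \<open>Subtree below the root: terminal node (with label) or worker node (attribute and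
  list of outgoing edges with their labels and target subtrees).  A decision tree is the
  nonempty list of subtrees hanging from the (unlabeled) root.\<close>
datatype 'f dtree = Leaf nat | Node 'f "(nat \<times> 'f dtree) list"

type_synonym 'f decision_tree = "'f dtree list"

inductive wf_sub :: "nat \<Rightarrow> 'f set \<Rightarrow> bool \<Rightarrow> 'f dtree \<Rightarrow> bool" for k A det where
  "wf_sub k A det (Leaf m)"
| "es \<noteq> [] \<Longrightarrow> f \<in> A \<Longrightarrow> (det \<longrightarrow> distinct (map fst es)) \<Longrightarrow>
   (\<forall>e \<in> set es. fst e < k \<and> wf_sub k A det (snd e)) \<Longrightarrow> wf_sub k A det (Node f es)"
monos Ball_def

definition wf_tree :: "nat \<Rightarrow> 'f set \<Rightarrow> bool \<Rightarrow> 'f decision_tree \<Rightarrow> bool" where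
  "wf_tree k A det \<Gamma> \<longleftrightarrow> \<Gamma> \<noteq> [] \<and> (det \<longrightarrow> length \<Gamma> = 1) \<and> (\<forall>t \<in> set \<Gamma>. wf_sub k A det t)"

inductive sub_path :: "'f dtree \<Rightarrow> ('f \<times> nat) list \<Rightarrow> nat \<Rightarrow> bool" where
  "sub_path (Leaf m) [] m"
| "(\<delta>, t) \<in> set es \<Longrightarrow> sub_path t p m \<Longrightarrow> sub_path (Node f es) ((f, \<delta>) # p) m"

text \<open>Complete paths \<open>\<xi>\<close>, represented by \<open>(\<pi>(\<xi>), \<tau>(\<xi>))\<close>.\<close>
definition cpath :: "'f decision_tree \<Rightarrow> ('f \<times> nat) list \<Rightarrow> nat \<Rightarrow> bool" where
  "cpath \<Gamma> p m \<longleftrightarrow> (\<exists>t \<in> set \<Gamma>. sub_path t p m)"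

definition tree_for :: "nat \<Rightarrow> bool \<Rightarrow> 'f table \<Rightarrow> 'f decision_tree \<Rightarrow> bool" where
  "tree_for k det T \<Gamma> \<longleftrightarrow> wf_tree k (At T) det \<Gamma> \<and>
     (\<Union>{DeltaSub T p | p m. cpath \<Gamma> p m}) = Delta T \<and>
     (\<forall>(r, D) \<in> set (rows T). \<forall>p m. cpath \<Gamma> p m \<and> r \<in> DeltaSub T p \<longrightarrow> m \<in> D)"

definition limited :: "('f list \<Rightarrow> nat) \<Rightarrow> bool" where
  "limited \<psi> \<longleftrightarrow> (\<forall>a1 a2. \<psi> (a1 @ a2) \<le> \<psi> a1 + \<psi> a2) \<and>
     (\<forall>a1 a2 a3. \<psi> (a1 @ a2 @ a3) \<ge> \<psi> (a1 @ a3)) \<and> (\<forall>a. \<psi> a \<ge> length a)"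

definition tree_cost :: "('f list \<Rightarrow> nat) \<Rightarrow> 'f decision_tree \<Rightarrow> nat" where
  "tree_cost \<psi> \<Gamma> = Max {\<psi> (map fst p) | p m. cpath \<Gamma> p m}"

definition psi_i :: "('f list \<Rightarrow> nat) \<Rightarrow> 'f table \<Rightarrow> nat" where
  "psi_i \<psi> T = \<psi> (cols T)"

definition psi_d :: "nat \<Rightarrow> ('f list \<Rightarrow> nat) \<Rightarrow> 'f table \<Rightarrow> nat" where
  "psi_d k \<psi> T = (LEAST n. \<exists>\<Gamma>. tree_for k True T \<Gamma> \<and> tree_cost \<psi> \<Gamma> = n)"

definition psi_a :: "nat \<Rightarrow> ('f list \<Rightarrow> nat) \<Rightarrow> 'f table \<Rightarrow> nat" where
  "psi_a k \<psi> T = (LEAST n. \<exists>\<Gamma>. tree_for k False T \<Gamma> \<and> tree_cost \<psi> \<Gamma> = n)"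

definition U :: "'f table set \<Rightarrow> ('f table \<Rightarrow> nat) \<Rightarrow> ('f table \<Rightarrow> nat) \<Rightarrow> nat \<Rightarrow> nat option" where
  "U C b c n = (let S = b ` {T \<in> C. c T \<le> n} in
                 if S \<noteq> {} \<and> finite S then Some (Max S) else None)"

definition Dom :: "(nat \<Rightarrow> nat option) \<Rightarrow> nat set" where
  "Dom g = {n. g n \<noteq> None}"
definition Dom_plus :: "(nat \<Rightarrow> nat option) \<Rightarrow> nat set" where
  "Dom_plus g = {n \<in> Dom g. the (g n) \<ge> n}"
definition Dom_minus :: "(nat \<Rightarrow> nat option) \<Rightarrow> nat set" where
  "Dom_minus g = {n \<in> Dom g. the (g n) \<le> n}"

definition bdd_above_pf :: "(nat \<Rightarrow> nat option) \<Rightarrow> bool" where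
  "bdd_above_pf g \<longleftrightarrow> (\<exists>B. \<forall>n \<in> Dom g. the (g n) \<le> B)"

datatype fun_type = TAlpha | TBeta | TGamma | TDelta | TEpsilon

definition has_typ :: "(nat \<Rightarrow> nat option) \<Rightarrow> fun_type \<Rightarrow> bool" where
  "has_typ g t = (case t of
      TAlpha \<Rightarrow> infinite (Dom g) \<and> bdd_above_pf g
    | TBeta \<Rightarrow> infinite (Dom g) \<and> finite (Dom_plus g) \<and> \<not> bdd_above_pf g
    | TGamma \<Rightarrow> infinite (Dom_plus g) \<and> infinite (Dom_minus g)
    | TDelta \<Rightarrow> infinite (Dom g) \<and> finite (Dom_minus g)
    | TEpsilon \<Rightarrow> finite (Dom g))"

end

theory Submission
  imports Defs
begin

definition val :: "'f table \<Rightarrow> nat list \<Rightarrow> 'f \<Rightarrow> nat" where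
  "val T r f = r ! (SOME i. i < length (cols T) \<and> cols T ! i = f)"

definition rf :: "'f table \<Rightarrow> nat list \<Rightarrow> 'f \<Rightarrow> nat" where
  "rf T r = (\<lambda>f. if f \<in> At T then val T r f else 0)"

definition RF :: "'f table \<Rightarrow> ('f \<Rightarrow> nat) set" where
  "RF T = rf T ` Delta T"

definition satr :: "'f set \<Rightarrow> ('f \<Rightarrow> nat) \<Rightarrow> ('f \<times> nat) list \<Rightarrow> bool" where
  "satr A g p \<longleftrightarrow> (\<forall>(f, \<delta>) \<in> set p. f \<in> A \<longrightarrow> g f = \<delta>)"

definition restr :: "'f set \<Rightarrow> ('f \<Rightarrow> nat) \<Rightarrow> 'f \<Rightarrow> nat" where
  "restr A g = (\<lambda>f. if f \<in> A then g f else 0)"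

lemma Delta_ex: "r \<in> Delta T \<Longrightarrow> \<exists>D. (r, D) \<in> set (rows T)"
  by (auto simp: Delta_def)

lemma tbl_row: "tbl k T \<Longrightarrow> (r, D) \<in> set (rows T) \<Longrightarrow>
   length r = length (cols T) \<and> (\<forall>x \<in> set r. x < k) \<and> D \<noteq> {} \<and> finite D"
  unfolding tbl_def by fast

lemma tbl_cons: "tbl k T \<Longrightarrow> r \<in> Delta T \<Longrightarrow> i < length (cols T) \<Longrightarrow> j < length (cols T) \<Longrightarrow>
   cols T ! i = cols T ! j \<Longrightarrow> r ! i = r ! j"
  unfolding tbl_def Delta_def by fastforce

lemma tbl_len: "tbl k T \<Longrightarrow> r \<in> Delta T \<Longrightarrow> length r = length (cols T)"
  using tbl_row Delta_ex by metis

lemma tbl_lt: "tbl k T \<Longrightarrow> r \<in> Delta T \<Longrightarrow> i < length r \<Longrightarrow> r ! i < k"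
  using tbl_row Delta_ex nth_mem by metis

lemma val_nth: assumes "tbl k T" "r \<in> Delta T" "i < length (cols T)"
  shows "val T r (cols T ! i) = r ! i"
proof -
  let ?j = "SOME j. j < length (cols T) \<and> cols T ! j = cols T ! i"
  have "?j < length (cols T) \<and> cols T ! ?j = cols T ! i"
    by (rule someI_ex) (use assms in blast)
  then show ?thesis unfolding val_def using tbl_cons[OF assms(1,2)] assms(3) by metis
qed

lemma At_ex: "f \<in> At T \<Longrightarrow> \<exists>i < length (cols T). cols T ! i = f"
  by (auto simp: At_def in_set_conv_nth)

lemma val_lt: assumes "tbl k T" "r \<in> Delta T" "f \<in> At T" shows "val T r f < k"
  using At_ex[OF assms(3)] val_nth[OF assms(1,2)] tbl_lt[OF assms(1,2)] tbl_len[OF assms(1,2)]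
  by metis

lemma sat_val: assumes "tbl k T" "r \<in> Delta T"
  shows "sat T r p \<longleftrightarrow> (\<forall>(f, \<delta>) \<in> set p. f \<in> At T \<longrightarrow> val T r f = \<delta>)"
  unfolding sat_def using val_nth[OF assms] At_ex
  by (smt (verit, ccfv_SIG) At_def case_prodI2 nth_mem split_conv)

lemma sat_rf: assumes "tbl k T" "r \<in> Delta T"
  shows "sat T r p \<longleftrightarrow> satr (At T) (rf T r) p"
  unfolding sat_val[OF assms] satr_def rf_def by auto

lemma sat_Cons: assumes "tbl k T" "r \<in> Delta T" "f \<in> At T"
  shows "sat T r ((f, a) # p) \<longleftrightarrow> val T r f = a \<and> sat T r p"
  unfolding sat_val[OF assms(1,2)] using assms(3) by auto

lemma rf_inj: assumes "tbl k T" shows "inj_on (rf T) (Delta T)"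
proof
  fix r s assume r: "r \<in> Delta T" and s: "s \<in> Delta T" and e: "rf T r = rf T s"
  show "r = s"
  proof (rule nth_equalityI)
    show "length r = length s" using tbl_len[OF assms r] tbl_len[OF assms s] by simp
    fix i assume "i < length r"
    then have i: "i < length (cols T)" using tbl_len[OF assms r] by simp
    have "cols T ! i \<in> At T" using i by (simp add: At_def)
    then have "val T r (cols T ! i) = val T s (cols T ! i)" using e unfolding rf_def by metis
    then show "r ! i = s ! i" using val_nth[OF assms r i] val_nth[OF assms s i] by simp
  qed
qed

definition dec :: "'f table \<Rightarrow> nat list \<Rightarrow> nat set" where
  "dec T r = (SOME D. (r, D) \<in> set (rows T))"

lemma dec_eq: assumes "tbl k T" "(r, D) \<in> set (rows T)" shows "dec T r = D"
proof -
  have "(r, dec T r) \<in> set (rows T)" unfolding dec_def by (rule someI) (rule assms(2))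
  moreover have "distinct (map fst (rows T))" using assms(1) by (simp add: tbl_def)
  ultimately show ?thesis using eq_key_imp_eq_value assms(2) by metis
qed

lemma dec_ne: assumes "tbl k T" "r \<in> Delta T" shows "dec T r \<noteq> {}"
  using Delta_ex[OF assms(2)] dec_eq[OF assms(1)] tbl_row[OF assms(1)] by metis


lemma concat_if_map: "concat (map (\<lambda>i. if P i then [f i] else []) ys) = map f (filter P ys)"
  by (induction ys) auto

lemma keep_first_alt: "keep_first xs = map (nth xs) (filter (\<lambda>i. \<forall>j < i. fst (xs ! j) \<noteq> fst (xs ! i)) [0..<length xs])"
  unfolding keep_first_def by (simp add: concat_if_map)

lemma keep_first_fst: "set (map fst (keep_first xs)) = set (map fst xs)"
proof
  show "set (map fst (keep_first xs)) \<subseteq> set (map fst xs)"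
    unfolding keep_first_alt by auto
next
  show "set (map fst xs) \<subseteq> set (map fst (keep_first xs))"
  proof
    fix x assume "x \<in> set (map fst xs)"
    then obtain i where i: "i < length xs" "fst (xs ! i) = x" by (auto simp: in_set_conv_nth)
    define i0 where "i0 = (LEAST i. i < length xs \<and> fst (xs ! i) = x)"
    have i0: "i0 < length xs \<and> fst (xs ! i0) = x" unfolding i0_def by (rule LeastI) (use i in blast)
    have "\<forall>j < i0. fst (xs ! j) \<noteq> fst (xs ! i0)"
      using not_less_Least i0 unfolding i0_def by (metis (mono_tags, lifting) order.strict_trans)
    then have "i0 \<in> set (filter (\<lambda>i. \<forall>j < i. fst (xs ! j) \<noteq> fst (xs ! i)) [0..<length xs])"
      using i0 by simp
    then show "x \<in> set (map fst (keep_first xs))" using i0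
      unfolding keep_first_alt by force
  qed
qed

lemma del_at_len: "i < length xs \<Longrightarrow> length (del_at i xs) = length xs - 1"
  by (simp add: del_at_def)

lemma del_at_nth: "i < length xs \<Longrightarrow> j < length xs - 1 \<Longrightarrow>
   del_at i xs ! j = xs ! (if j < i then j else Suc j)"
  by (auto simp: del_at_def nth_append min_def)

lemma del_at_split: "i < length xs \<Longrightarrow> xs = take i xs @ xs ! i # drop (Suc i) xs"
  by (rule id_take_nth_drop)

lemma set_del_at: "i < length xs \<Longrightarrow> set xs - {xs ! i} \<subseteq> set (del_at i xs)"
proof -
  assume "i < length xs"
  then have "set xs = set (take i xs) \<union> {xs ! i} \<union> set (drop (Suc i) xs)"
    using del_at_split by (metis Un_insert_right insert_is_Un set_append set_simps(2) sup_commute)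
  then show ?thesis unfolding del_at_def by auto
qed

lemma set_del_at2: "set (del_at i xs) \<subseteq> set xs"
  unfolding del_at_def using set_drop_subset set_take_subset by fastforce

lemma filter_del_at2: "i < length xs \<Longrightarrow> P (xs ! i) \<Longrightarrow>
   length (filter P (del_at i xs)) < length (filter P xs)"
proof -
  assume a: "i < length xs" "P (xs ! i)"
  have "length (filter P xs) = length (filter P (take i xs @ xs ! i # drop (Suc i) xs))"
    using del_at_split[OF a(1)] by metis
  then show ?thesis using a(2) unfolding del_at_def by simp
qed

lemma closedD: "closed_class k C \<Longrightarrow> T \<in> C \<Longrightarrow> op_step T T' \<Longrightarrow> T' \<in> C"
  unfolding closed_class_def by blast

lemma closed_tbl: "closed_class k C \<Longrightarrow> T \<in> C \<Longrightarrow> tbl k T"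
  unfolding closed_class_def by blast

definition rem :: "nat \<Rightarrow> 'f table \<Rightarrow> 'f table" where
  "rem i T = (del_at i (cols T), keep_first (map (\<lambda>(r, D). (del_at i r, D)) (rows T)))"

lemma rem_C: "closed_class k C \<Longrightarrow> T \<in> C \<Longrightarrow> 2 \<le> length (cols T) \<Longrightarrow> i < length (cols T) \<Longrightarrow>
  rem i T \<in> C"
  unfolding rem_def by (rule closedD) (auto intro: op_step.remove)

lemma rem_At: "At (rem i T) = set (del_at i (cols T))"
  by (simp add: At_def rem_def cols_def)

lemma rem_Delta: "Delta (rem i T) = del_at i ` Delta T"
proof -
  have "Delta (rem i T) = set (map fst (map (\<lambda>(r, D). (del_at i r, D)) (rows T)))"
    unfolding Delta_def rem_def rows_def using keep_first_fst by (simp add: image_image)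
  also have "\<dots> = del_at i ` Delta T" unfolding Delta_def
    by (simp add: image_image case_prod_beta)
  finally show ?thesis .
qed

lemma rem_rf: assumes C: "closed_class k C" "T \<in> C" and n: "2 \<le> length (cols T)" "i < length (cols T)"
  and r: "r \<in> Delta T"
  shows "rf (rem i T) (del_at i r) = restr (At (rem i T)) (rf T r)"
proof
  fix f
  have t: "tbl k T" by (rule closed_tbl[OF C])
  have t1: "tbl k (rem i T)" by (rule closed_tbl[OF C(1) rem_C[OF C n]])
  have r1: "del_at i r \<in> Delta (rem i T)" unfolding rem_Delta using r by (rule imageI)
  have lr: "length r = length (cols T)" by (rule tbl_len[OF t r])
  show "rf (rem i T) (del_at i r) f = restr (At (rem i T)) (rf T r) f"
  proof (cases "f \<in> At (rem i T)")
    case True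
    obtain j where j: "j < length (cols (rem i T))" "cols (rem i T) ! j = f" using At_ex[OF True] by blast
    have cj: "cols (rem i T) = del_at i (cols T)" by (simp add: rem_def cols_def)
    define j' where "j' = (if j < i then j else Suc j)"
    have jl: "j < length (cols T) - 1" using j(1) unfolding cj del_at_len[OF n(2)] .
    have fj: "f = cols T ! j'" using j cj del_at_nth[OF n(2) jl] j'_def by simp
    have j'l: "j' < length (cols T)" using jl j'_def by auto
    have "val (rem i T) (del_at i r) f = del_at i r ! j" using val_nth[OF t1 r1 j(1)] j(2) by simp
    also have "\<dots> = r ! j'" using del_at_nth[of i r j] lr n jl j'_def by simp
    also have "\<dots> = val T r f" using val_nth[OF t r j'l] fj by simp
    finally have "val (rem i T) (del_at i r) f = val T r f" .
    moreover have "f \<in> At T" using True set_del_at2[of i "cols T"] unfolding rem_At by (auto simp: At_def)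
    ultimately show ?thesis using True unfolding rf_def restr_def by simp
  next
    case False
    then show ?thesis unfolding rf_def restr_def by simp
  qed
qed

lemma rem_RF: assumes C: "closed_class k C" "T \<in> C" and n: "2 \<le> length (cols T)" "i < length (cols T)"
  shows "RF (rem i T) = restr (At (rem i T)) ` RF T"
proof -
  have "RF (rem i T) = (\<lambda>r. rf (rem i T) (del_at i r)) ` Delta T"
    unfolding RF_def rem_Delta image_image ..
  also have "\<dots> = (\<lambda>r. restr (At (rem i T)) (rf T r)) ` Delta T"
    using rem_rf[OF C n] by (rule image_cong[OF refl])
  also have "\<dots> = restr (At (rem i T)) ` RF T" unfolding RF_def image_image ..
  finally show ?thesis .
qed

lemma restr_restr: "restr A (restr B g) = restr (A \<inter> B) g"
  by (auto simp: restr_def)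

lemma restr_rf: "restr (At T) (rf T r) = rf T r"
  by (auto simp: restr_def rf_def)

lemma rem_cols: "cols (rem i T) = del_at i (cols T)"
  by (simp add: rem_def cols_def)


lemma proj_ex_aux: "length (filter (\<lambda>f. f \<notin> A) (cols T)) = N \<Longrightarrow> closed_class k C \<Longrightarrow> T \<in> C \<Longrightarrow> A \<inter> At T \<noteq> {} \<Longrightarrow>
   \<exists>T' \<in> C. At T' = At T \<inter> A \<and> RF T' = restr (At T \<inter> A) ` RF T"
proof (induction N arbitrary: T rule: less_induct)
  case (less N)
  show ?case
  proof (cases "\<exists>i < length (cols T). cols T ! i \<notin> A")
    case False
    have "At T \<subseteq> A"
    proof
      fix f assume "f \<in> At T"
      then obtain i where "i < length (cols T)" "cols T ! i = f" using At_ex[of f T] by blast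
      then show "f \<in> A" using False by blast
    qed
    then have e1: "At T \<inter> A = At T" by blast
    have e2: "restr (At T) ` RF T = RF T" unfolding RF_def image_image restr_rf[of T] by simp
    show ?thesis unfolding e1 e2 using less.prems(3) by blast
  next
    case True
    then obtain i where i: "i < length (cols T)" "cols T ! i \<notin> A" by blast
    obtain f where f: "f \<in> A" "f \<in> At T" using less.prems(4) by blast
    obtain j where j: "j < length (cols T)" "cols T ! j = f" using At_ex[OF f(2)] by blast
    have "j \<noteq> i"
    proof
      assume "j = i" then show False using i(2) f(1) j(2) by simp
    qed
    then have n: "2 \<le> length (cols T)" using i(1) j(1) by linarith
    have C1: "rem i T \<in> C" by (rule rem_C[OF less.prems(2,3) n i(1)])
    have s1: "set (del_at i (cols T)) \<subseteq> set (cols T)" by (rule set_del_at2)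
    have s2: "set (cols T) - {cols T ! i} \<subseteq> set (del_at i (cols T))" by (rule set_del_at[OF i(1)])
    have A1: "At (rem i T) \<inter> A = At T \<inter> A"
      unfolding At_def rem_cols using s1 s2 i(2) by blast
    have lt: "length (filter (\<lambda>f. f \<notin> A) (cols (rem i T))) < N"
      unfolding rem_cols less.prems(1)[symmetric] by (rule filter_del_at2[of i "cols T" "\<lambda>f. f \<notin> A", OF i])
    have ne: "A \<inter> At (rem i T) \<noteq> {}" using A1 less.prems(4) by blast
    obtain T' where T': "T' \<in> C" "At T' = At (rem i T) \<inter> A"
        "RF T' = restr (At (rem i T) \<inter> A) ` RF (rem i T)"
      using less.IH[OF lt refl less.prems(2) C1 ne] by blast
    have e: "At (rem i T) \<inter> A \<inter> At (rem i T) = At T \<inter> A" using A1 by blast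
    have R: "RF T' = restr (At T \<inter> A) ` RF T"
      unfolding T'(3) rem_RF[OF less.prems(2,3) n i(1)] image_image restr_restr e ..
    have At': "At T' = At T \<inter> A" using T'(2) A1 by simp
    show ?thesis using T'(1) At' R by blast
  qed
qed

lemma proj_ex: "closed_class k C \<Longrightarrow> T \<in> C \<Longrightarrow> A \<inter> At T \<noteq> {} \<Longrightarrow>
   \<exists>T' \<in> C. At T' = At T \<inter> A \<and> RF T' = restr (At T \<inter> A) ` RF T"
  using proj_ex_aux by blast

lemma sub_path_Leaf: "sub_path (Leaf d) p m \<longleftrightarrow> p = [] \<and> m = d"
  by (auto elim: sub_path.cases intro: sub_path.intros)

lemma sub_path_Node: "sub_path (Node f es) q m \<longleftrightarrow>
   (\<exists>a t p. q = (f, a) # p \<and> (a, t) \<in> set es \<and> sub_path t p m)"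
proof
  assume "sub_path (Node f es) q m"
  then show "\<exists>a t p. q = (f, a) # p \<and> (a, t) \<in> set es \<and> sub_path t p m"
    by (cases rule: sub_path.cases) auto
qed (auto intro: sub_path.intros)

lemma path_attrs: "sub_path t p m \<Longrightarrow> wf_sub k A det t \<Longrightarrow> (\<forall>(f, a) \<in> set p. f \<in> A \<and> a < k)"
proof (induction rule: sub_path.induct)
  case (1 m)
  then show ?case by simp
next
  case (2 \<delta> t es p m f)
  from 2(4) have "f \<in> A" "\<forall>e \<in> set es. fst e < k \<and> wf_sub k A det (snd e)"
    by (auto elim: wf_sub.cases)
  then show ?case using 2 by fastforce
qed

lemma finite_paths: "finite {(p, m). sub_path t p m}"
proof (induction t)
  case (Leaf d)
  then show ?case by (simp add: sub_path_Leaf)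
next
  case (Node f es)
  have "{(p, m). sub_path (Node f es) p m} \<subseteq>
     (\<Union>e \<in> set es. (\<lambda>(p, m). ((f, fst e) # p, m)) ` {(p, m). sub_path (snd e) p m})"
    by (force simp: sub_path_Node)
  moreover have "finite (\<Union>e \<in> set es. (\<lambda>(p, m). ((f, fst e) # p, m)) ` {(p, m). sub_path (snd e) p m})"
  proof (rule finite_UN_I)
    fix e assume "e \<in> set es"
    have "snd e \<in> Basic_BNFs.snds e" by (metis prod.collapse prod_set_simps(2) singletonI)
    then show "finite ((\<lambda>(p, m). ((f, fst e) # p, m)) ` {(p, m). sub_path (snd e) p m})"
      using Node \<open>e \<in> set es\<close> by blast
  qed simp
  ultimately show ?case by (rule finite_subset)
qed

lemma finite_cpath_vals: "finite {\<psi> (map fst p) | p m. cpath \<Gamma> p m}"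
proof -
  have "{\<psi> (map fst p) | p m. cpath \<Gamma> p m} \<subseteq> (\<lambda>(p, m). \<psi> (map fst p)) ` (\<Union>t \<in> set \<Gamma>. {(p, m). sub_path t p m})"
    by (force simp: cpath_def)
  moreover have "finite (\<Union>t \<in> set \<Gamma>. {(p, m). sub_path t p m})"
    using finite_paths by blast
  ultimately show ?thesis using finite_subset by blast
qed

lemma cost_le: "cpath \<Gamma> p m \<Longrightarrow> \<psi> (map fst p) \<le> tree_cost \<psi> \<Gamma>"
  unfolding tree_cost_def by (rule Max_ge[OF finite_cpath_vals]) blast

fun chain :: "('f \<times> nat) list \<Rightarrow> nat \<Rightarrow> 'f dtree" where
  "chain [] d = Leaf d"
| "chain ((f, a) # p) d = Node f [(a, chain p d)]"

lemma sub_path_chain: "sub_path (chain p d) q m \<longleftrightarrow> q = p \<and> m = d"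
  by (induction p d arbitrary: q rule: chain.induct) (auto simp: sub_path_Leaf sub_path_Node)

lemma wf_chain: "(\<forall>(f, a) \<in> set p. f \<in> A \<and> a < k) \<Longrightarrow> wf_sub k A det (chain p d)"
  by (induction p d rule: chain.induct) (auto intro: wf_sub.intros)


lemma sat_zip_self: assumes "tbl k T" "r \<in> Delta T" shows "sat T r (zip (cols T) r)"
  unfolding sat_val[OF assms]
proof (intro ballI, clarify)
  fix f \<delta> assume "(f, \<delta>) \<in> set (zip (cols T) r)"
  then obtain i where i: "i < length (cols T)" "i < length r" "f = cols T ! i" "\<delta> = r ! i"
    by (auto simp: in_set_zip)
  then show "val T r f = \<delta>" using val_nth[OF assms i(1)] by simp
qed

lemma sat_zip_eq: assumes "tbl k T" "r \<in> Delta T" "s \<in> Delta T" "sat T s (zip (cols T) r)"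
  shows "s = r"
proof (rule nth_equalityI)
  show "length s = length r" using tbl_len[OF assms(1,2)] tbl_len[OF assms(1,3)] by simp
  fix i assume "i < length s"
  then have i: "i < length (cols T)" "i < length r" using tbl_len[OF assms(1,2)] tbl_len[OF assms(1,3)] by auto
  have "(cols T ! i, r ! i) \<in> set (zip (cols T) r)" using i by (auto simp: in_set_zip)
  moreover have "cols T ! i \<in> At T" using i by (simp add: At_def)
  ultimately have "val T s (cols T ! i) = r ! i" using assms(4) unfolding sat_val[OF assms(1,3)] by fastforce
  then show "s ! i = r ! i" using val_nth[OF assms(1,3) i(1)] by simp
qed

lemma DeltaSub_sub: "DeltaSub T p \<subseteq> Delta T"
  by (auto simp: DeltaSub_def)

lemma nd_exists: assumes t: "tbl k T" shows "\<exists>\<Gamma>. tree_for k False T \<Gamma>"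
proof (cases "rows T = []")
  case True
  then have D: "Delta T = {}" by (simp add: Delta_def)
  have "tree_for k False T [Leaf 0]"
    unfolding tree_for_def wf_tree_def using D DeltaSub_sub[of T] True
    by (auto intro: wf_sub.intros)
  then show ?thesis by blast
next
  case False
  define ch where "ch = (\<lambda>(r::nat list, D::nat set). chain (zip (cols T) r) (SOME d. d \<in> D))"
  define \<Gamma> where "\<Gamma> = map ch (rows T)"
  have cp: "cpath \<Gamma> p m \<longleftrightarrow> (\<exists>r D. (r, D) \<in> set (rows T) \<and> p = zip (cols T) r \<and> m = (SOME d. d \<in> D))" for p m
    unfolding cpath_def \<Gamma>_def ch_def by (force simp: sub_path_chain)
  have wf: "wf_tree k (At T) False \<Gamma>"
    unfolding wf_tree_def
  proof (intro conjI)
    show "\<Gamma> \<noteq> []" using False by (simp add: \<Gamma>_def)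
    show "\<forall>t\<in>set \<Gamma>. wf_sub k (At T) False t"
    proof
      fix t assume "t \<in> set \<Gamma>"
      then obtain r D where rD: "(r, D) \<in> set (rows T)" "t = chain (zip (cols T) r) (SOME d. d \<in> D)"
        by (auto simp: \<Gamma>_def ch_def)
      have rl: "\<forall>x \<in> set r. x < k" using tbl_row[OF t rD(1)] by blast
      show "wf_sub k (At T) False t" unfolding rD(2)
        by (rule wf_chain) (use rl in \<open>auto simp: At_def dest: set_zip_leftD set_zip_rightD\<close>)
    qed
  qed simp
  have cov: "\<Union>{DeltaSub T p | p m. cpath \<Gamma> p m} = Delta T"
  proof
    show "\<Union>{DeltaSub T p | p m. cpath \<Gamma> p m} \<subseteq> Delta T" using DeltaSub_sub by blast
    show "Delta T \<subseteq> \<Union>{DeltaSub T p | p m. cpath \<Gamma> p m}"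
    proof
      fix r assume r: "r \<in> Delta T"
      then obtain D where rD: "(r, D) \<in> set (rows T)" using Delta_ex by blast
      have "r \<in> DeltaSub T (zip (cols T) r)" using sat_zip_self[OF t r] r by (simp add: DeltaSub_def)
      moreover have "cpath \<Gamma> (zip (cols T) r) (SOME d. d \<in> D)" using cp rD by blast
      ultimately show "r \<in> \<Union>{DeltaSub T p | p m. cpath \<Gamma> p m}" by blast
    qed
  qed
  have dc: "\<forall>(s, D') \<in> set (rows T). \<forall>p m. cpath \<Gamma> p m \<and> s \<in> DeltaSub T p \<longrightarrow> m \<in> D'"
  proof (clarify)
    fix s D' p m assume sD: "(s, D') \<in> set (rows T)" and c: "cpath \<Gamma> p m" and sp: "s \<in> DeltaSub T p"
    obtain r D where rD: "(r, D) \<in> set (rows T)" "p = zip (cols T) r" "m = (SOME d. d \<in> D)"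
      using c cp by blast
    have r: "r \<in> Delta T" using rD(1) by (force simp: Delta_def)
    have s: "s \<in> Delta T" using sD by (force simp: Delta_def)
    have "s = r" using sat_zip_eq[OF t r s] sp rD(2) by (simp add: DeltaSub_def)
    then have "D' = D" using dec_eq[OF t sD] dec_eq[OF t rD(1)] by simp
    moreover have "D \<noteq> {}" using tbl_row[OF t rD(1)] by blast
    ultimately show "m \<in> D'" using rD(3) by (simp add: some_in_eq)
  qed
  show ?thesis unfolding tree_for_def using wf cov dc by blast
qed


lemma psi_empty_le: assumes "limited \<psi>" shows "\<psi> [] \<le> \<psi> xs"
proof -
  have "\<psi> ([] @ []) \<le> \<psi> ([] @ xs @ [])" using assms unfolding limited_def by blast
  then show ?thesis by simp
qed

lemma psi_len: "limited \<psi> \<Longrightarrow> length xs \<le> \<psi> xs"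
  unfolding limited_def by blast

lemma psi_single: assumes "limited \<psi>" "f \<in> set xs" shows "\<psi> [f] \<le> \<psi> xs"
proof -
  obtain ys zs where xs: "xs = ys @ f # zs" using assms(2) by (meson split_list)
  have "\<psi> ([] @ ([f] @ zs)) \<le> \<psi> ([] @ ys @ ([f] @ zs))"
    using assms(1) unfolding limited_def by blast
  moreover have "\<psi> ([f] @ []) \<le> \<psi> ([f] @ zs @ [])"
    using assms(1) unfolding limited_def by blast
  ultimately show ?thesis unfolding xs by simp
qed

lemma psi_sum: assumes "limited \<psi>" "\<forall>f \<in> set xs. \<psi> [f] \<le> m"
  shows "\<psi> xs \<le> \<psi> [] + m * length xs"
  using assms(2)
proof (induction xs)
  case Nil
  then show ?case by simp
next
  case (Cons x xs)
  have "\<psi> ([x] @ xs) \<le> \<psi> [x] + \<psi> xs" using assms(1) unfolding limited_def by blast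
  then show ?case using Cons by simp
qed

definition udt :: "'f table \<Rightarrow> 'f table" where
  "udt T = (cols T, map (\<lambda>j. (fst (rows T ! j), {j})) [0..<length (rows T)])"

lemma udt_cols[simp]: "cols (udt T) = cols T"
  by (simp add: udt_def cols_def)

lemma udt_rows: "rows (udt T) = map (\<lambda>j. (fst (rows T ! j), {j})) [0..<length (rows T)]"
  by (simp add: udt_def rows_def)

lemma map_fst_udt: "map fst (map (\<lambda>j. (fst (xs ! j), {j})) [0..<length xs]) = map fst xs"
proof -
  have "map fst (map (\<lambda>j. (fst (xs ! j), {j})) [0..<length xs]) = map fst (map (nth xs) [0..<length xs])"
    by simp
  also have "\<dots> = map fst xs" by (simp only: map_nth)
  finally show ?thesis .
qed

lemma udt_Delta[simp]: "Delta (udt T) = Delta T"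
proof -
  have "map fst (rows (udt T)) = map fst (rows T)" unfolding udt_rows
    by (rule map_fst_udt)
  then show ?thesis by (simp add: Delta_def)
qed

lemma udt_step: "op_step T (udt T)"
proof -
  have "map fst (rows (udt T)) = map fst (rows T)" unfolding udt_rows
    by (rule map_fst_udt)
  then have "op_step T (cols T, rows (udt T))" by (rule op_step.change) (auto simp: udt_rows)
  then show ?thesis by (simp add: udt_def cols_def rows_def)
qed

lemma udt_At[simp]: "At (udt T) = At T" by (simp add: At_def)
lemma udt_sat[simp]: "sat (udt T) r p = sat T r p" by (simp add: sat_def)
lemma udt_DeltaSub[simp]: "DeltaSub (udt T) p = DeltaSub T p" by (simp add: DeltaSub_def)

lemma Delta_idx: "r \<in> Delta T \<Longrightarrow> \<exists>j < length (rows T). fst (rows T ! j) = r"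
  by (auto simp: Delta_def in_set_conv_nth) (metis fst_conv)

lemma udt_row_in: "j < length (rows T) \<Longrightarrow> (fst (rows T ! j), {j}) \<in> set (rows (udt T))"
  unfolding udt_rows by auto

lemma cert: assumes C: "closed_class k C" and B: "\<forall>T \<in> C. psi_a k \<psi> T \<le> m" and l: "limited \<psi>"
  and T: "T \<in> C" and g: "g \<in> RF T"
  shows "\<exists>p. satr (At T) g p \<and> (\<forall>g' \<in> RF T. satr (At T) g' p \<longrightarrow> g' = g) \<and>
     (\<forall>(f, a) \<in> set p. f \<in> At T \<and> a < k) \<and> \<psi> (map fst p) \<le> m"
proof -
  have t: "tbl k T" by (rule closed_tbl[OF C T])
  have U: "udt T \<in> C" by (rule closedD[OF C T udt_step])
  have tU: "tbl k (udt T)" by (rule closed_tbl[OF C U])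
  obtain \<Gamma>1 where "tree_for k False (udt T) \<Gamma>1" using nd_exists[OF tU] by blast
  then have ex: "\<exists>n \<Gamma>. tree_for k False (udt T) \<Gamma> \<and> tree_cost \<psi> \<Gamma> = n" by blast
  have "\<exists>\<Gamma>. tree_for k False (udt T) \<Gamma> \<and> tree_cost \<psi> \<Gamma> = psi_a k \<psi> (udt T)"
    unfolding psi_a_def using ex by (rule LeastI_ex)
  then obtain \<Gamma> where G: "tree_for k False (udt T) \<Gamma>" and Gc: "tree_cost \<psi> \<Gamma> \<le> m"
    using B U by fastforce
  obtain r where r: "r \<in> Delta T" and gr: "g = rf T r" using g by (auto simp: RF_def)
  have "r \<in> \<Union>{DeltaSub (udt T) p | p m. cpath \<Gamma> p m}" using G r unfolding tree_for_def by simp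
  then obtain p d where pd: "cpath \<Gamma> p d" "r \<in> DeltaSub T p" by auto
  have dec: "\<forall>(s, D) \<in> set (rows (udt T)). \<forall>p m. cpath \<Gamma> p m \<and> s \<in> DeltaSub (udt T) p \<longrightarrow> m \<in> D"
    using G unfolding tree_for_def by blast
  have uniq: "s = r" if s: "s \<in> DeltaSub T p" for s
  proof -
    have sD: "s \<in> Delta T" using s by (simp add: DeltaSub_def)
    obtain j where j: "j < length (rows T)" "fst (rows T ! j) = r" using Delta_idx[OF r] by blast
    obtain j' where j': "j' < length (rows T)" "fst (rows T ! j') = s" using Delta_idx[OF sD] by blast
    have "d \<in> {j}" using dec udt_row_in[OF j(1)] pd j(2) by fastforce
    moreover have "d \<in> {j'}" using dec udt_row_in[OF j'(1)] pd(1) s j'(2) by fastforce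
    ultimately show "s = r" using j j' by simp
  qed
  have s1: "satr (At T) g p" using pd(2) sat_rf[OF t r] gr by (simp add: DeltaSub_def)
  have s2: "\<forall>g' \<in> RF T. satr (At T) g' p \<longrightarrow> g' = g"
  proof (intro ballI impI)
    fix g' assume "g' \<in> RF T" "satr (At T) g' p"
    then obtain s where s: "s \<in> Delta T" "g' = rf T s" "satr (At T) (rf T s) p" by (auto simp: RF_def)
    then have "s \<in> DeltaSub T p" using sat_rf[OF t s(1)] by (simp add: DeltaSub_def)
    then show "g' = g" using uniq s gr by simp
  qed
  obtain t0 where t0: "t0 \<in> set \<Gamma>" "sub_path t0 p d" using pd(1) by (auto simp: cpath_def)
  have "wf_sub k (At T) False t0" using G t0(1) unfolding tree_for_def wf_tree_def by simp
  then have s3: "\<forall>(f, a) \<in> set p. f \<in> At T \<and> a < k" using path_attrs[OF t0(2)] by blast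
  have "\<psi> (map fst p) \<le> m" using cost_le[OF pd(1), of \<psi>] Gc by simp
  then show ?thesis using s1 s2 s3 by blast
qed


context
  fixes k :: nat and C :: "'f table set" and \<psi> :: "'f list \<Rightarrow> nat" and m :: nat
  assumes C: "closed_class k C" and B: "\<forall>T \<in> C. psi_a k \<psi> T \<le> m" and l: "limited \<psi>"
begin

definition W :: "'f table \<Rightarrow> 'f set" where "W T = {f \<in> At T. \<psi> [f] \<le> m}"

lemma RF_out: "g \<in> RF T \<Longrightarrow> f \<notin> At T \<Longrightarrow> g f = 0"
  by (auto simp: RF_def rf_def)

lemma W_sep: assumes T: "T \<in> C" and g: "g \<in> RF T" and g': "g' \<in> RF T" and eq: "\<forall>f \<in> W T. g f = g' f"
  shows "g = g'"
proof (rule ccontr)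
  assume "g \<noteq> g'"
  then obtain f where f: "g f \<noteq> g' f" by blast
  have fA: "f \<in> At T" using RF_out[OF g] RF_out[OF g'] f by metis
  have fW: "\<not> \<psi> [f] \<le> m" using eq f fA by (auto simp: W_def)
  have ne: "{f} \<inter> At T \<noteq> {}" using fA by blast
  obtain T1 where T1: "T1 \<in> C" "At T1 = At T \<inter> {f}" "RF T1 = restr (At T \<inter> {f}) ` RF T"
    using proj_ex[OF C T ne] by blast
  have A1: "At T \<inter> {f} = {f}" using fA by blast
  have rg: "restr {f} g \<in> RF T1" using T1(3) A1 g by simp
  have rg': "restr {f} g' \<in> RF T1" using T1(3) A1 g' by simp
  obtain p where p: "satr (At T1) (restr {f} g) p" "\<forall>h \<in> RF T1. satr (At T1) h p \<longrightarrow> h = restr {f} g"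
      "\<forall>(f', a) \<in> set p. f' \<in> At T1 \<and> a < k" "\<psi> (map fst p) \<le> m"
    using cert[OF C B l T1(1) rg] by blast
  have "restr {f} g' \<noteq> restr {f} g" using f by (metis restr_def singletonI)
  then have "\<not> satr (At T1) (restr {f} g') p" using p(2) rg' by blast
  then have "p \<noteq> []" by (auto simp: satr_def)
  then obtain x where x: "x \<in> set p" by (cases p) auto
  then have "fst x = f" using p(3) T1(2) A1 by auto
  then have "f \<in> set (map fst p)" using x by force
  then have "\<psi> [f] \<le> m" using psi_single[OF l] p(4) by (meson le_trans)
  then show False using fW by blast
qed

lemma W_sub: "W T \<subseteq> At T" by (auto simp: W_def)

lemma Q_ex: assumes T: "T \<in> C"
  shows "\<exists>Q. set Q \<subseteq> W T \<and> length Q \<le> m + 1 \<and>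
    (\<forall>g \<in> RF T. \<forall>g' \<in> RF T. (\<forall>f \<in> set Q. g f = v f) \<longrightarrow> (\<forall>f \<in> set Q. g' f = v f) \<longrightarrow> g = g')"
proof -
  define P where "P S \<longleftrightarrow> S \<subseteq> W T \<and>
    (\<forall>g \<in> RF T. \<forall>g' \<in> RF T. (\<forall>f \<in> S. g f = v f) \<longrightarrow> (\<forall>f \<in> S. g' f = v f) \<longrightarrow> g = g')" for S
  have "P (W T)" unfolding P_def using W_sep[OF T] by auto
  then obtain S where S: "P S" and Smin: "\<forall>S'. P S' \<longrightarrow> card S \<le> card S'"
    using ex_has_least_nat[of P "W T" card] by blast
  have finA: "finite (At T)" by (simp add: At_def)
  have finS: "finite S" using S finA W_sub unfolding P_def by (meson finite_subset)
  have SA: "S \<subseteq> At T" using S W_sub unfolding P_def by blast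
  have cardS: "card S \<le> m + 1"
  proof (rule ccontr)
    assume cS: "\<not> card S \<le> m + 1"
    have hj: "\<exists>g \<in> RF T. (\<forall>f \<in> S - {j}. g f = v f) \<and> g j \<noteq> v j" if j: "j \<in> S" for j
    proof -
      have "card (S - {j}) < card S" using finS j by (meson card_Diff1_less)
      then have "\<not> P (S - {j})" using Smin by (meson not_le)
      moreover have "S - {j} \<subseteq> W T" using S unfolding P_def by blast
      ultimately obtain g1 g2 where g12: "g1 \<in> RF T" "g2 \<in> RF T" "\<forall>f \<in> S - {j}. g1 f = v f"
          "\<forall>f \<in> S - {j}. g2 f = v f" "g1 \<noteq> g2"
        unfolding P_def by blast
      show ?thesis
      proof (cases "g1 j = v j")
        case True
        show ?thesis
        proof (cases "g2 j = v j")
          case True2: True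
          have "\<forall>f \<in> S. g1 f = v f" using g12(3) True by blast
          moreover have "\<forall>f \<in> S. g2 f = v f" using g12(4) True2 by blast
          ultimately have "g1 = g2" using S g12(1,2) unfolding P_def by blast
          then show ?thesis using g12(5) by blast
        next
          case False
          then show ?thesis using g12(2,4) by blast
        qed
      next
        case False
        then show ?thesis using g12(1,3) by blast
      qed
    qed
    obtain j where j: "j \<in> S" using cS by fastforce
    define A where "A = S - {j}"
    have cA: "card A \<ge> m + 1" using cS finS j unfolding A_def by (simp add: card_Diff_singleton)
    have AS: "A \<subseteq> At T" using SA unfolding A_def by blast
    have "A \<noteq> {}" using cA by (intro notI) simp
    then have Ane: "A \<inter> At T \<noteq> {}" using AS by blast
    obtain T2 where T2: "T2 \<in> C" "At T2 = At T \<inter> A" "RF T2 = restr (At T \<inter> A) ` RF T"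
      using proj_ex[OF C T Ane] by blast
    have AA: "At T \<inter> A = A" using AS by blast
    obtain gj where gj: "gj \<in> RF T" "\<forall>f \<in> S - {j}. gj f = v f" "gj j \<noteq> v j" using hj[OF j] by blast
    have rj: "restr A gj \<in> RF T2" using T2(3) AA gj(1) by simp
    obtain p where p: "satr A (restr A gj) p" "\<forall>h \<in> RF T2. satr A h p \<longrightarrow> h = restr A gj"
        "\<forall>(f', a) \<in> set p. f' \<in> A \<and> a < k" "\<psi> (map fst p) \<le> m"
      using cert[OF C B l T2(1) rj] T2(2) AA by auto
    have "length p \<le> m" using psi_len[OF l, of "map fst p"] p(4) by simp
    then have "card (fst ` set p) \<le> m" using card_image_le[of "set p" fst, OF finite_set] card_length[of p] by linarith
    then have "\<not> A \<subseteq> fst ` set p" using cA card_mono[of "fst ` set p" A] by auto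
    then obtain i where i: "i \<in> A" "i \<notin> fst ` set p" by blast
    have iS: "i \<in> S" using i(1) unfolding A_def by blast
    obtain gi where gi: "gi \<in> RF T" "\<forall>f \<in> S - {i}. gi f = v f" "gi i \<noteq> v i" using hj[OF iS] by blast
    have ri: "restr A gi \<in> RF T2" using T2(3) AA gi(1) by simp
    have "satr A (restr A gi) p"
      unfolding satr_def
    proof (clarify)
      fix f \<delta> assume fd: "(f, \<delta>) \<in> set p" "f \<in> A"
      have "f \<noteq> i" using fd(1) i(2) by force
      then have "gi f = v f" using gi(2) fd(2) unfolding A_def by blast
      moreover have "restr A gj f = \<delta>" using p(1) fd unfolding satr_def by fastforce
      moreover have "gj f = v f" using gj(2) fd(2) unfolding A_def by blast
      ultimately show "restr A gi f = \<delta>" using fd(2) by (simp add: restr_def)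
    qed
    then have "restr A gi = restr A gj" using p(2) ri by blast
    then have "gi i = gj i" using i(1) by (metis restr_def)
    moreover have "gj i = v i" using gj(2) i(1) unfolding A_def by blast
    ultimately show False using gi(3) by simp
  qed
  obtain Q where Q: "set Q = S" "distinct Q" using finite_distinct_list[OF finS] by blast
  have "length Q \<le> m + 1" using Q cardS distinct_card by metis
  then show ?thesis using Q(1) S unfolding P_def by blast
qed

end


definition good :: "nat \<Rightarrow> 'f table \<Rightarrow> 'f set \<Rightarrow> nat list set \<Rightarrow> 'f dtree \<Rightarrow> nat \<Rightarrow> bool" where
  "good k T Wt R t d \<longleftrightarrow> wf_sub k (At T) True t \<and> (\<exists>p m. sub_path t p m) \<and>
     (\<forall>p m. sub_path t p m \<longrightarrow> length p \<le> d \<and> fst ` set p \<subseteq> Wt \<and> (\<forall>r \<in> R. sat T r p \<longrightarrow> m \<in> dec T r)) \<and>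
     (\<forall>r \<in> R. \<exists>p m. sub_path t p m \<and> sat T r p)"

lemma good_mono: "good k T Wt R t d \<Longrightarrow> d \<le> d' \<Longrightarrow> good k T Wt R t d'"
  unfolding good_def by fastforce

lemma good_leaf: assumes t: "tbl k T" and R: "R \<subseteq> Delta T" "finite R" "card R \<le> 1"
  shows "\<exists>t. good k T Wt R t 0"
proof (cases "R = {}")
  case True
  have "good k T Wt R (Leaf 0) 0" unfolding good_def using True
    by (auto simp: sub_path_Leaf intro: wf_sub.intros sub_path.intros)
  then show ?thesis by blast
next
  case False
  then obtain r where Rr: "R = {r}" using R(2,3) by (metis card_1_singletonE card_0_eq le_Suc_eq One_nat_def le_zero_eq)
  have r: "r \<in> Delta T" using R(1) Rr by blast
  have "(SOME d. d \<in> dec T r) \<in> dec T r" using dec_ne[OF t r] by (simp add: some_in_eq)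
  then have "good k T Wt R (Leaf (SOME d. d \<in> dec T r)) 0" unfolding good_def using Rr
    by (auto simp: sub_path_Leaf sat_def intro: wf_sub.intros sub_path.intros)
  then show ?thesis by blast
qed

lemma good_block: assumes t: "tbl k T" and k: "1 \<le> k"
  shows "set Q \<subseteq> Wt \<inter> At T \<Longrightarrow> R \<subseteq> Delta T \<Longrightarrow>
    (\<forall>R' \<subseteq> R. ((\<exists>f \<in> set Q. \<exists>a. a \<noteq> v f \<and> (\<forall>r \<in> R'. val T r f = a)) \<or>
                  (\<forall>r \<in> R'. \<forall>f \<in> set Q. val T r f = v f)) \<longrightarrow> (\<exists>t. good k T Wt R' t d)) \<Longrightarrow>
    \<exists>t. good k T Wt R t (d + length Q)"
proof (induction Q arbitrary: R)
  case Nil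
  then show ?case by simp
next
  case (Cons f Q)
  define Ra where "Ra a = {r \<in> R. val T r f = a}" for a
  have fW: "f \<in> Wt" "f \<in> At T" using Cons.prems(1) by auto
  have ex: "\<exists>t. good k T Wt (Ra a) t (d + length Q)" if a: "a < k" for a
  proof (cases "a = v f")
    case True
    have "\<exists>t. good k T Wt (Ra a) t (d + length Q)"
    proof (rule Cons.IH)
      show "set Q \<subseteq> Wt \<inter> At T" using Cons.prems(1) by simp
      show "Ra a \<subseteq> Delta T" using Cons.prems(2) by (auto simp: Ra_def)
      show "\<forall>R' \<subseteq> Ra a. ((\<exists>f \<in> set Q. \<exists>a. a \<noteq> v f \<and> (\<forall>r \<in> R'. val T r f = a)) \<or>
                  (\<forall>r \<in> R'. \<forall>f \<in> set Q. val T r f = v f)) \<longrightarrow> (\<exists>t. good k T Wt R' t d)"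
      proof (intro allI impI)
        fix R' assume R': "R' \<subseteq> Ra a" and h: "(\<exists>f \<in> set Q. \<exists>a. a \<noteq> v f \<and> (\<forall>r \<in> R'. val T r f = a)) \<or>
                  (\<forall>r \<in> R'. \<forall>f \<in> set Q. val T r f = v f)"
        have "R' \<subseteq> R" using R' by (auto simp: Ra_def)
        moreover have "(\<exists>f' \<in> set (f # Q). \<exists>a. a \<noteq> v f' \<and> (\<forall>r \<in> R'. val T r f' = a)) \<or>
                  (\<forall>r \<in> R'. \<forall>f' \<in> set (f # Q). val T r f' = v f')"
          using h R' True by (auto simp: Ra_def)
        ultimately show "\<exists>t. good k T Wt R' t d" using Cons.prems(3) by blast
      qed
    qed
    then show ?thesis .
  next
    case False
    have "Ra a \<subseteq> R" by (auto simp: Ra_def)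
    moreover have "\<exists>f' \<in> set (f # Q). \<exists>b. b \<noteq> v f' \<and> (\<forall>r \<in> Ra a. val T r f' = b)"
      using False by (auto simp: Ra_def)
    ultimately obtain t where "good k T Wt (Ra a) t d" using Cons.prems(3) by blast
    then show ?thesis using good_mono by (metis le_add1)
  qed
  then have "\<forall>a \<in> {..<k}. \<exists>t. good k T Wt (Ra a) t (d + length Q)" by blast
  then obtain tr where tr: "\<forall>a \<in> {..<k}. good k T Wt (Ra a) (tr a) (d + length Q)"
    by (metis bchoice)
  define es where "es = map (\<lambda>a. (a, tr a)) [0..<k]"
  have ines: "(a, t') \<in> set es \<longleftrightarrow> a < k \<and> t' = tr a" for a t'
    by (auto simp: es_def)
  have trg: "good k T Wt (Ra a) (tr a) (d + length Q)" if "a < k" for a using tr that by blast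
  have wf: "wf_sub k (At T) True (Node f es)"
  proof (rule wf_sub.intros)
    show "es \<noteq> []" using k by (simp add: es_def)
    show "f \<in> At T" by (rule fW(2))
    show "True \<longrightarrow> distinct (map fst es)" by (simp add: es_def comp_def)
    show "\<forall>e\<in>set es. fst e < k \<and> wf_sub k (At T) True (snd e)"
      using trg unfolding good_def es_def by auto
  qed
  have ep: "\<exists>p m. sub_path (Node f es) p m"
  proof -
    obtain p m where "sub_path (tr 0) p m" using trg[of 0] k unfolding good_def by auto
    moreover have "(0, tr 0) \<in> set es" using ines k by simp
    ultimately show ?thesis by (blast intro: sub_path.intros)
  qed
  have paths: "\<forall>q m. sub_path (Node f es) q m \<longrightarrow> length q \<le> d + length (f # Q) \<and> fst ` set q \<subseteq> Wt \<and>
      (\<forall>r \<in> R. sat T r q \<longrightarrow> m \<in> dec T r)"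
  proof (intro allI impI)
    fix q m assume "sub_path (Node f es) q m"
    then obtain a t' p where q: "q = (f, a) # p" "(a, t') \<in> set es" "sub_path t' p m"
      by (auto simp: sub_path_Node)
    have a: "a < k" "t' = tr a" using q(2) ines by auto
    have g: "good k T Wt (Ra a) (tr a) (d + length Q)" using trg a(1) .
    have "length p \<le> d + length Q" "fst ` set p \<subseteq> Wt" "\<forall>r \<in> Ra a. sat T r p \<longrightarrow> m \<in> dec T r"
      using g q(3) a(2) unfolding good_def by blast+
    moreover have "\<forall>r \<in> R. sat T r q \<longrightarrow> r \<in> Ra a \<and> sat T r p"
    proof (intro ballI impI)
      fix r assume "r \<in> R" "sat T r q"
      then show "r \<in> Ra a \<and> sat T r p"
        using sat_Cons[OF t _ fW(2)] Cons.prems(2) q(1) by (auto simp: Ra_def)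
    qed
    ultimately show "length q \<le> d + length (f # Q) \<and> fst ` set q \<subseteq> Wt \<and> (\<forall>r \<in> R. sat T r q \<longrightarrow> m \<in> dec T r)"
      using q(1) fW(1) by auto
  qed
  have cov: "\<forall>r \<in> R. \<exists>q m. sub_path (Node f es) q m \<and> sat T r q"
  proof
    fix r assume r: "r \<in> R"
    then have rD: "r \<in> Delta T" using Cons.prems(2) by blast
    define a where "a = val T r f"
    have a: "a < k" using val_lt[OF t rD fW(2)] a_def by simp
    have "r \<in> Ra a" using r a_def by (simp add: Ra_def)
    then obtain p m where pm: "sub_path (tr a) p m" "sat T r p" using trg[OF a] unfolding good_def by blast
    have "sub_path (Node f es) ((f, a) # p) m" using pm(1) ines a by (blast intro: sub_path.intros)
    moreover have "sat T r ((f, a) # p)" using sat_Cons[OF t rD fW(2)] pm(2) a_def by simp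
    ultimately show "\<exists>q m. sub_path (Node f es) q m \<and> sat T r q" by blast
  qed
  have "good k T Wt R (Node f es) (d + length (f # Q))"
    unfolding good_def using wf ep paths cov by blast
  then show ?case by blast
qed


lemma majority: assumes "finite R" shows "\<exists>a. \<forall>b. card {r \<in> R. h r = b} \<le> card {r \<in> R. h r = a}"
proof (cases "R = {}")
  case True then show ?thesis by simp
next
  case False
  define F where "F b = card {r \<in> R. h r = b}" for b
  have fin: "finite (F ` h ` R)" using assms by simp
  have ne: "F ` h ` R \<noteq> {}" using False by simp
  have "Max (F ` h ` R) \<in> F ` h ` R" using Max_in[OF fin ne] .
  then obtain a where a: "a \<in> h ` R" "F a = Max (F ` h ` R)" by (metis imageE)
  have "F b \<le> F a" for b
  proof (cases "b \<in> h ` R")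
    case True then show ?thesis using a(2) Max_ge[OF fin] by simp
  next
    case False
    then have "{r \<in> R. h r = b} = {}" by auto
    then have "F b = 0" unfolding F_def by (metis card.empty)
    then show ?thesis by simp
  qed
  then show ?thesis unfolding F_def by blast
qed

lemma half: assumes "finite R" "\<forall>b. card {r \<in> R. h r = b} \<le> card {r \<in> R. h r = a}" "b \<noteq> a"
  shows "2 * card {r \<in> R. h r = b} \<le> card R"
proof -
  have "card ({r \<in> R. h r = b} \<union> {r \<in> R. h r = a}) = card {r \<in> R. h r = b} + card {r \<in> R. h r = a}"
    using assms by (intro card_Un_disjoint) auto
  moreover have "card ({r \<in> R. h r = b} \<union> {r \<in> R. h r = a}) \<le> card R"
    using assms(1) by (intro card_mono) auto
  ultimately show ?thesis using assms(2)[rule_format, of b] by linarith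
qed

lemma finite_Delta: "finite (Delta T)" by (simp add: Delta_def)

lemma good_halving: assumes t: "tbl k T" and k: "1 \<le> k"
  and Qx: "\<forall>v. \<exists>Q. set Q \<subseteq> Wt \<inter> At T \<and> length Q \<le> M \<and>
     (\<forall>r \<in> Delta T. \<forall>s \<in> Delta T. (\<forall>f \<in> set Q. val T r f = v f) \<longrightarrow> (\<forall>f \<in> set Q. val T s f = v f) \<longrightarrow> r = s)"
  shows "R \<subseteq> Delta T \<Longrightarrow> card R \<le> 2 ^ c \<Longrightarrow> \<exists>t. good k T Wt R t (M * c)"
proof (induction c arbitrary: R)
  case 0
  then show ?case using good_leaf[OF t 0(1)] finite_subset[OF 0(1) finite_Delta] by simp
next
  case (Suc c)
  have finR: "finite R" using finite_subset[OF Suc.prems(1) finite_Delta] .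
  show ?case
  proof (cases "card R \<le> 1")
    case True
    then obtain t0 where "good k T Wt R t0 0" using good_leaf[OF t Suc.prems(1) finR] by blast
    then show ?thesis using good_mono by (metis zero_le)
  next
    case False
    define v where "v f = (SOME a. \<forall>b. card {r \<in> R. val T r f = b} \<le> card {r \<in> R. val T r f = a})" for f
    have vmax: "\<forall>b. card {r \<in> R. val T r f = b} \<le> card {r \<in> R. val T r f = v f}" for f
      unfolding v_def by (rule someI_ex) (rule majority[OF finR])
    obtain Q where Q: "set Q \<subseteq> Wt \<inter> At T" "length Q \<le> M"
      "\<forall>r \<in> Delta T. \<forall>s \<in> Delta T. (\<forall>f \<in> set Q. val T r f = v f) \<longrightarrow> (\<forall>f \<in> set Q. val T s f = v f) \<longrightarrow> r = s"
      using Qx by blast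
    have "\<exists>t. good k T Wt R t (M * c + length Q)"
    proof (rule good_block[OF t k Q(1) Suc.prems(1)], intro allI impI)
      fix R' assume R': "R' \<subseteq> R" and h: "(\<exists>f \<in> set Q. \<exists>a. a \<noteq> v f \<and> (\<forall>r \<in> R'. val T r f = a)) \<or>
                  (\<forall>r \<in> R'. \<forall>f \<in> set Q. val T r f = v f)"
      have R'D: "R' \<subseteq> Delta T" using R' Suc.prems(1) by blast
      have "card R' \<le> 2 ^ c"
        using h
      proof
        assume "\<exists>f \<in> set Q. \<exists>a. a \<noteq> v f \<and> (\<forall>r \<in> R'. val T r f = a)"
        then obtain f a where fa: "a \<noteq> v f" "\<forall>r \<in> R'. val T r f = a" by blast
        have "R' \<subseteq> {r \<in> R. val T r f = a}" using fa(2) R' by blast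
        then have "card R' \<le> card {r \<in> R. val T r f = a}" using finR by (intro card_mono) auto
        moreover have "2 * card {r \<in> R. val T r f = a} \<le> card R" using half[OF finR vmax fa(1)] .
        ultimately show ?thesis using Suc.prems(2) by simp
      next
        assume m: "\<forall>r \<in> R'. \<forall>f \<in> set Q. val T r f = v f"
        have "\<forall>r \<in> R'. \<forall>s \<in> R'. r = s" using m Q(3) R'D by blast
        then have "card R' \<le> 1" using finite_subset[OF R' finR] by (simp add: card_le_Suc0_iff_eq)
        then show ?thesis by (meson le_trans one_le_numeral one_le_power)
      qed
      then show "\<exists>t. good k T Wt R' t (M * c)" using Suc.IH[OF R'D] by blast
    qed
    then obtain t0 where "good k T Wt R t0 (M * c + length Q)" by blast
    moreover have "M * c + length Q \<le> M * Suc c" using Q(2) by simp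
    ultimately show ?thesis using good_mono by blast
  qed
qed


lemma sum_pow_le: "(\<Sum>i\<le>m. (N::nat) ^ i) \<le> (N + 1) ^ m"
proof (induction m)
  case 0 then show ?case by simp
next
  case (Suc m)
  have "N ^ m \<le> (N + 1) ^ m" by (simp add: power_mono)
  then have "N * N ^ m \<le> N * (N + 1) ^ m" by (rule mult_left_mono) simp
  then have "(\<Sum>i\<le>m. N ^ i) + N * N ^ m \<le> (N + 1) ^ m + N * (N + 1) ^ m" using Suc by (rule add_mono[rotated])
  then show ?case by simp
qed

definition Lf :: "nat \<Rightarrow> nat \<Rightarrow> nat" where "Lf k x = (LEAST L. k * x + 1 \<le> 2 ^ L)"

lemma Lf_ok: "k * x + 1 \<le> 2 ^ Lf k x"
  unfolding Lf_def
proof (rule LeastI[of _ "k * x + 1"])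
  have "k * x < 2 ^ (k * x)" by (rule less_exp)
  then show "k * x + 1 \<le> 2 ^ (k * x + 1)" unfolding power_add power_one_right by linarith
qed

lemma Lf_mono: "x \<le> y \<Longrightarrow> Lf k x \<le> Lf k y"
  unfolding Lf_def by (rule Least_le) (metis Lf_def Lf_ok add_le_mono1 le_trans mult_le_mono2)

context
  fixes k :: nat and C :: "'f table set" and \<psi> :: "'f list \<Rightarrow> nat" and m :: nat
  assumes C: "closed_class k C" and B: "\<forall>T \<in> C. psi_a k \<psi> T \<le> m" and l: "limited \<psi>"
begin

lemma count_rows: assumes T: "T \<in> C" shows "card (Delta T) \<le> (card (At T) * k + 1) ^ m"
proof -
  have t: "tbl k T" by (rule closed_tbl[OF C T])
  define P where "P r p \<longleftrightarrow> satr (At T) (rf T r) p \<and> (\<forall>g' \<in> RF T. satr (At T) g' p \<longrightarrow> g' = rf T r) \<and>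
     (\<forall>(f, a) \<in> set p. f \<in> At T \<and> a < k) \<and> \<psi> (map fst p) \<le> m" for r p
  define cp where "cp r = (SOME p. P r p)" for r
  have cpP: "P r (cp r)" if "r \<in> Delta T" for r
    unfolding cp_def P_def by (rule someI_ex) (rule cert[OF C B l T], use that in \<open>simp add: RF_def\<close>)
  have inj: "inj_on cp (Delta T)"
  proof
    fix r s assume r: "r \<in> Delta T" and s: "s \<in> Delta T" and e: "cp r = cp s"
    have "satr (At T) (rf T s) (cp r)" using cpP[OF s] e unfolding P_def by simp
    moreover have "rf T s \<in> RF T" using s by (simp add: RF_def)
    ultimately have "rf T s = rf T r" using cpP[OF r] unfolding P_def by blast
    then show "r = s" using rf_inj[OF t] r s by (metis inj_onD)
  qed
  define L where "L = {p. set p \<subseteq> At T \<times> {..<k} \<and> length p \<le> m}"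
  have sub: "cp ` Delta T \<subseteq> L"
  proof
    fix p assume "p \<in> cp ` Delta T"
    then obtain r where r: "r \<in> Delta T" "p = cp r" by blast
    have "P r p" using cpP[OF r(1)] r(2) by simp
    then have "set p \<subseteq> At T \<times> {..<k}" "\<psi> (map fst p) \<le> m" unfolding P_def by auto
    moreover have "length p \<le> \<psi> (map fst p)" using psi_len[OF l, of "map fst p"] by simp
    ultimately show "p \<in> L" unfolding L_def by simp
  qed
  have finA: "finite (At T \<times> {..<k})" by (simp add: At_def)
  have "card (Delta T) = card (cp ` Delta T)" using card_image[OF inj] by simp
  also have "\<dots> \<le> card L" unfolding L_def by (rule card_mono[OF finite_lists_length_le[OF finA]]) (use sub in \<open>simp add: L_def\<close>)
  also have "\<dots> = (\<Sum>i\<le>m. card (At T \<times> {..<k}) ^ i)" unfolding L_def by (rule card_lists_length_le[OF finA])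
  also have "\<dots> \<le> (card (At T \<times> {..<k}) + 1) ^ m" by (rule sum_pow_le)
  also have "card (At T \<times> {..<k}) = card (At T) * k" by (simp add: card_cartesian_product)
  finally show ?thesis .
qed

lemma psi_d_bound: assumes T: "T \<in> C" and k: "1 \<le> k"
  shows "psi_d k \<psi> T \<le> \<psi> [] + m * ((m + 1) * (m * Lf k (length (cols T))))"
proof -
  have t: "tbl k T" by (rule closed_tbl[OF C T])
  define n where "n = length (cols T)"
  define c where "c = m * Lf k n"
  have "card (At T) \<le> n" unfolding n_def At_def by (rule card_length)
  then have "card (At T) * k + 1 \<le> k * n + 1" by (simp add: mult.commute)
  also have "\<dots> \<le> 2 ^ Lf k n" by (rule Lf_ok)
  finally have "(card (At T) * k + 1) ^ m \<le> (2 ^ Lf k n) ^ m" by (rule power_mono) simp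
  then have cD: "card (Delta T) \<le> 2 ^ c" using count_rows[OF T] unfolding c_def
    by (simp add: power_mult[symmetric] mult.commute)
  have Qx: "\<forall>v. \<exists>Q. set Q \<subseteq> W \<psi> m T \<inter> At T \<and> length Q \<le> m + 1 \<and>
     (\<forall>r \<in> Delta T. \<forall>s \<in> Delta T. (\<forall>f \<in> set Q. val T r f = v f) \<longrightarrow> (\<forall>f \<in> set Q. val T s f = v f) \<longrightarrow> r = s)"
  proof
    fix v
    obtain Q where Q: "set Q \<subseteq> W \<psi> m T" "length Q \<le> m + 1"
      "\<forall>g \<in> RF T. \<forall>g' \<in> RF T. (\<forall>f \<in> set Q. g f = v f) \<longrightarrow> (\<forall>f \<in> set Q. g' f = v f) \<longrightarrow> g = g'"
      using Q_ex[OF C B l T, of v] by blast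
    have QA: "set Q \<subseteq> At T" using Q(1) W_sub[OF C B l] by blast
    have "\<forall>r \<in> Delta T. \<forall>s \<in> Delta T. (\<forall>f \<in> set Q. val T r f = v f) \<longrightarrow> (\<forall>f \<in> set Q. val T s f = v f) \<longrightarrow> r = s"
    proof (intro ballI impI)
      fix r s assume r: "r \<in> Delta T" and s: "s \<in> Delta T" and hr: "\<forall>f \<in> set Q. val T r f = v f"
        and hs: "\<forall>f \<in> set Q. val T s f = v f"
      have "\<forall>f \<in> set Q. rf T r f = v f" using hr QA by (auto simp: rf_def)
      moreover have "\<forall>f \<in> set Q. rf T s f = v f" using hs QA by (auto simp: rf_def)
      moreover have "rf T r \<in> RF T" "rf T s \<in> RF T" using r s by (auto simp: RF_def)
      ultimately have "rf T r = rf T s" using Q(3) by blast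
      then show "r = s" using rf_inj[OF t] r s by (metis inj_onD)
    qed
    then show "\<exists>Q. set Q \<subseteq> W \<psi> m T \<inter> At T \<and> length Q \<le> m + 1 \<and>
     (\<forall>r \<in> Delta T. \<forall>s \<in> Delta T. (\<forall>f \<in> set Q. val T r f = v f) \<longrightarrow> (\<forall>f \<in> set Q. val T s f = v f) \<longrightarrow> r = s)"
      using Q(1,2) QA by blast
  qed
  obtain t0 where t0: "good k T (W \<psi> m T) (Delta T) t0 ((m + 1) * c)"
    using good_halving[OF t k Qx, of "Delta T" c] cD by blast
  have tf: "tree_for k True T [t0]"
    unfolding tree_for_def
  proof (intro conjI)
    show "wf_tree k (At T) True [t0]" using t0 unfolding good_def wf_tree_def by simp
    show "\<Union>{DeltaSub T p | p m. cpath [t0] p m} = Delta T"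
    proof
      show "\<Union>{DeltaSub T p | p m. cpath [t0] p m} \<subseteq> Delta T" using DeltaSub_sub[of T] by blast
      show "Delta T \<subseteq> \<Union>{DeltaSub T p | p m. cpath [t0] p m}"
      proof
        fix r assume r: "r \<in> Delta T"
        then obtain p d where "sub_path t0 p d" "sat T r p" using t0 unfolding good_def by blast
        then show "r \<in> \<Union>{DeltaSub T p | p m. cpath [t0] p m}" using r
          by (auto simp: cpath_def DeltaSub_def)
      qed
    qed
    show "\<forall>(r, D) \<in> set (rows T). \<forall>p d. cpath [t0] p d \<and> r \<in> DeltaSub T p \<longrightarrow> d \<in> D"
    proof (clarify)
      fix r D p d assume rD: "(r, D) \<in> set (rows T)" and c: "cpath [t0] p d" and rp: "r \<in> DeltaSub T p"
      have "r \<in> Delta T" "sat T r p" using rp by (auto simp: DeltaSub_def)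
      moreover have "sub_path t0 p d" using c by (simp add: cpath_def)
      ultimately have "d \<in> dec T r" using t0 unfolding good_def by blast
      then show "d \<in> D" using dec_eq[OF t rD] by simp
    qed
  qed
  have cost: "tree_cost \<psi> [t0] \<le> \<psi> [] + m * ((m + 1) * c)"
    unfolding tree_cost_def
  proof (rule Max.boundedI)
    show "finite {\<psi> (map fst p) | p d. cpath [t0] p d}" by (rule finite_cpath_vals)
    show "{\<psi> (map fst p) | p d. cpath [t0] p d} \<noteq> {}" using t0 unfolding good_def cpath_def by auto
    fix x assume "x \<in> {\<psi> (map fst p) | p d. cpath [t0] p d}"
    then obtain p d where x: "x = \<psi> (map fst p)" "sub_path t0 p d" by (auto simp: cpath_def)
    have lp: "length p \<le> (m + 1) * c" "fst ` set p \<subseteq> W \<psi> m T" using t0 x(2) unfolding good_def by blast+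
    have "\<forall>f \<in> set (map fst p). \<psi> [f] \<le> m"
    proof
      fix f assume "f \<in> set (map fst p)"
      then have "f \<in> W \<psi> m T" using lp(2) by auto
      then show "\<psi> [f] \<le> m" by (simp add: W_def[OF C B l])
    qed
    then have "\<psi> (map fst p) \<le> \<psi> [] + m * length p" using psi_sum[OF l] by fastforce
    also have "\<dots> \<le> \<psi> [] + m * ((m + 1) * c)" using lp(1) by simp
    finally show "x \<le> \<psi> [] + m * ((m + 1) * c)" using x(1) by simp
  qed
  have "psi_d k \<psi> T \<le> tree_cost \<psi> [t0]"
    unfolding psi_d_def by (rule Least_le) (use tf in blast)
  then show ?thesis using cost unfolding c_def n_def by simp
qed

end


lemma two_pow_ge: "3 \<le> j \<Longrightarrow> 2 * j + 1 \<le> (2::nat) ^ j"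
proof (induction j rule: dec_induct)
  case base then show ?case by simp
next
  case (step j) then show ?case by simp
qed

lemma sq_le_pow: "j * j \<le> (2::nat) ^ j + 4"
proof (induction j)
  case 0 then show ?case by simp
next
  case (Suc j)
  show ?case
  proof (cases "j \<le> 2")
    case True
    then have "j = 0 \<or> j = 1 \<or> j = 2" by auto
    then show ?thesis by auto
  next
    case False
    then have "2 * j + 1 \<le> 2 ^ j" using two_pow_ge by simp
    then show ?thesis using Suc by simp
  qed
qed

lemma exp_lin: "\<exists>J. \<forall>j. (2::nat) ^ j \<le> c1 + c2 * j \<longrightarrow> j \<le> J"
proof (intro exI allI impI)
  fix j assume h: "(2::nat) ^ j \<le> c1 + c2 * j"
  show "j \<le> c1 + c2 + 5"
  proof (rule ccontr)
    assume "\<not> j \<le> c1 + c2 + 5"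
    then have j: "c1 + c2 + 5 \<le> j" by simp
    have "(c1 + c2 + 5) * j \<le> j * j" using j by simp
    moreover have "c1 * 1 \<le> c1 * j" using j by (intro mult_le_mono2) simp
    moreover have "j * j \<le> 2 ^ j + 4" by (rule sq_le_pow)
    moreover have "(c1 + c2 + 5) * j = c1 * j + c2 * j + 5 * j" by (simp add: algebra_simps)
    ultimately show False using h j by linarith
  qed
qed

lemma Lf_low: assumes "1 \<le> k" "1 \<le> x" shows "1 \<le> Lf k x" "2 ^ (Lf k x - 1) \<le> k * x"
proof -
  show L1: "1 \<le> Lf k x"
  proof (rule ccontr)
    assume "\<not> 1 \<le> Lf k x"
    then have "Lf k x = 0" by simp
    then have "k * x + 1 \<le> 1" using Lf_ok[of k x] by simp
    moreover have "1 \<le> k * x" using assms by simp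
    ultimately show False by simp
  qed
  have "Lf k x - 1 < Lf k x" using L1 by simp
  then have "\<not> k * x + 1 \<le> 2 ^ (Lf k x - 1)" unfolding Lf_def using not_less_Least by blast
  then show "2 ^ (Lf k x - 1) \<le> k * x" by simp
qed

lemma G_eventually: assumes k: "1 \<le> k"
  shows "\<exists>K. \<forall>x > K. a + b * Lf k x < (x::nat)"
proof -
  obtain J where J: "\<forall>j. (2::nat) ^ j \<le> (k * a + k * b) + (k * b) * j \<longrightarrow> j \<le> J"
    using exp_lin by blast
  have "a + b * Lf k x < x" if x: "x > a + b * (J + 1)" for x
  proof (rule ccontr)
    assume "\<not> a + b * Lf k x < x"
    then have g: "x \<le> a + b * Lf k x" by simp
    have x1: "1 \<le> x" using x by simp
    define j where "j = Lf k x - 1"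
    have Lj: "Lf k x = j + 1" using Lf_low(1)[OF k x1] j_def by simp
    have "2 ^ j \<le> k * x" using Lf_low(2)[OF k x1] j_def by simp
    also have "\<dots> \<le> k * (a + b * (j + 1))" using g Lj by simp
    also have "\<dots> = (k * a + k * b) + (k * b) * j" by (simp add: algebra_simps)
    finally have "j \<le> J" using J by blast
    then have "a + b * Lf k x \<le> a + b * (J + 1)" using Lj by simp
    then show False using g x by simp
  qed
  then show ?thesis by blast
qed

theorem lemma8:
  fixes k :: nat and C :: "'f table set" and \<psi> :: "'f list \<Rightarrow> nat"
  assumes "2 \<le> k"
    and "closed_class k C"
    and "limited \<psi>"
    and "has_typ (U C (psi_a k \<psi>) (psi_i \<psi>)) TAlpha"
  shows "has_typ (U C (psi_d k \<psi>) (psi_i \<psi>)) TAlpha \<or> has_typ (U C (psi_d k \<psi>) (psi_i \<psi>)) TBeta"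
proof -
  have k1: "1 \<le> k" using assms(1) by simp
  note C = assms(2) and l = assms(3)
  define Ua where "Ua = U C (psi_a k \<psi>) (psi_i \<psi>)"
  define Ud where "Ud = U C (psi_d k \<psi>) (psi_i \<psi>)"
  define CT where "CT n = {T \<in> C. psi_i \<psi> T \<le> n}" for n
  have infA: "infinite (Dom Ua)" and bddA: "bdd_above_pf Ua"
    using assms(4) unfolding Ua_def has_typ_def by auto
  obtain Bd where Bd: "\<forall>n \<in> Dom Ua. the (Ua n) \<le> Bd" using bddA unfolding bdd_above_pf_def by blast
  have UaS: "Ua n = Some (Max (psi_a k \<psi> ` CT n)) \<and> psi_a k \<psi> ` CT n \<noteq> {} \<and> finite (psi_a k \<psi> ` CT n)"
    if "n \<in> Dom Ua" for n
    using that unfolding Dom_def Ua_def U_def CT_def Let_def by (auto split: if_splits)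
  have bound: "\<forall>T \<in> C. psi_a k \<psi> T \<le> Bd"
  proof
    fix T assume T: "T \<in> C"
    obtain n where n: "n \<in> Dom Ua" "psi_i \<psi> T \<le> n"
      using infA unfolding finite_nat_set_iff_bounded_le by (meson nle_le)
    have "T \<in> CT n" using T n(2) by (simp add: CT_def)
    then have "psi_a k \<psi> T \<le> Max (psi_a k \<psi> ` CT n)" using UaS[OF n(1)] by (intro Max_ge) auto
    also have "\<dots> = the (Ua n)" using UaS[OF n(1)] by simp
    also have "\<dots> \<le> Bd" using Bd n(1) by blast
    finally show "psi_a k \<psi> T \<le> Bd" .
  qed
  define G where "G x = \<psi> [] + Bd * ((Bd + 1) * (Bd * Lf k x))" for x
  have Gmono: "G x \<le> G y" if "x \<le> y" for x y
    unfolding G_def using Lf_mono[OF that, of k] by (intro add_left_mono mult_le_mono2) simp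
  have dG: "psi_d k \<psi> T \<le> G (psi_i \<psi> T)" if T: "T \<in> C" for T
  proof -
    have "psi_d k \<psi> T \<le> G (length (cols T))" unfolding G_def by (rule psi_d_bound[OF C bound l T k1])
    also have "\<dots> \<le> G (psi_i \<psi> T)" by (rule Gmono) (simp add: psi_i_def psi_len[OF l])
    finally show ?thesis .
  qed
  obtain K where K: "\<forall>x > K. G x < x"
    using G_eventually[OF k1, of "\<psi> []" "Bd * ((Bd + 1) * Bd)"] unfolding G_def by (auto simp: algebra_simps)
  have finD: "finite (psi_d k \<psi> ` CT n)" for n
  proof (rule finite_subset)
    show "psi_d k \<psi> ` CT n \<subseteq> {..G n}"
      using dG Gmono unfolding CT_def by (fastforce intro: le_trans)
  qed simp
  have DomD: "n \<in> Dom Ud \<longleftrightarrow> CT n \<noteq> {}" for n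
    using finD[of n] unfolding Dom_def Ud_def U_def CT_def Let_def by auto
  have UdS: "Ud n = Some (Max (psi_d k \<psi> ` CT n))" if "n \<in> Dom Ud" for n
    using that finD[of n] DomD[of n] unfolding Ud_def U_def CT_def Let_def by auto
  have "Dom Ua \<subseteq> Dom Ud"
  proof
    fix n assume "n \<in> Dom Ua"
    then have "CT n \<noteq> {}" using UaS by blast
    then show "n \<in> Dom Ud" using DomD by blast
  qed
  then have infD: "infinite (Dom Ud)" using infA finite_subset by blast
  show ?thesis
  proof (cases "bdd_above_pf Ud")
    case True
    then show ?thesis using infD unfolding has_typ_def Ud_def by simp
  next
    case False
    have "Dom_plus Ud \<subseteq> {..G K}"
    proof
      fix n assume n: "n \<in> Dom_plus Ud"
      then have nD: "n \<in> Dom Ud" and ge: "n \<le> the (Ud n)" unfolding Dom_plus_def by auto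
      have ne: "CT n \<noteq> {}" using DomD nD by blast
      have "Max (psi_d k \<psi> ` CT n) \<in> psi_d k \<psi> ` CT n" using finD ne by (intro Max_in) auto
      then obtain T where T: "T \<in> C" "psi_i \<psi> T \<le> n" "psi_d k \<psi> T = the (Ud n)"
        using UdS[OF nD] unfolding CT_def by auto
      have "psi_i \<psi> T \<le> K"
      proof (rule ccontr)
        assume "\<not> psi_i \<psi> T \<le> K"
        then have "G (psi_i \<psi> T) < psi_i \<psi> T" using K by simp
        then show False using dG[OF T(1)] T ge by simp
      qed
      then have "n \<le> G K" using ge T(3) dG[OF T(1)] Gmono by (metis le_trans)
      then show "n \<in> {..G K}" by simp
    qed
    then have "finite (Dom_plus Ud)" using finite_subset by blast
    then show ?thesis using infD False unfolding has_typ_def Ud_def by simp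
  qed
qed

end
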